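(* The cofinality of $\mathfrak{hc}$ is uncountable.
   Context: A graph is a pair $(V,E)$ with $E\subseteq[V]^2$; its size is $|V|$. The chromatic number of a graph is the least cardinal $\mu$ admitting a proper coloring $c:V\to\mu$; a graph is uncountably chromatic if its chromatic number is uncountable. A graph $H$ is a minor of $G$ if there are pairwise disjoint non-empty vertex sets $(X_u)_{u\in V_H}$ of $G$, each inducing a connected subgraph, such that for each edge $\{u,v\}$ of $H$ some vertex of $X_u$ is adjacent in $G$ to some vertex of $X_v$. $K_{\omega_1}$ is the complete graph on $\omega_1$ vertices. $\mathfrak{hc}$ denotes the least size of an uncountably chromatic graph with no $K_{\omega_1}$ minor. *)

theory Defs
  imports Main "HOL-Library.Countable_Set"
begin

definition graph :: "'a set \<Rightarrow> 'a set set \<Rightarrow> bool" where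
  "graph V E \<longleftrightarrow> (\<forall>e\<in>E. \<exists>u v. u \<in> V \<and> v \<in> V \<and> u \<noteq> v \<and> e = {u, v})"

text \<open>Chromatic number uncountable: there is no proper colouring with
  countably many colours (the colour set omega is represented by nat).\<close>
definition uncountably_chromatic :: "'a set \<Rightarrow> 'a set set \<Rightarrow> bool" where
  "uncountably_chromatic V E \<longleftrightarrow>
     \<not> (\<exists>c :: 'a \<Rightarrow> nat. \<forall>u\<in>V. \<forall>v\<in>V. {u, v} \<in> E \<longrightarrow> c u \<noteq> c v)"

definition connected_in :: "'a set \<Rightarrow> 'a set set \<Rightarrow> 'a set \<Rightarrow> bool" where
  "connected_in V E X \<longleftrightarrow> X \<noteq> {} \<and> X \<subseteq> V \<and>
     (\<forall>x\<in>X. \<forall>y\<in>X. (x, y) \<in> {(u, v). u \<in> X \<and> v \<in> X \<and> {u, v} \<in> E}\<^sup>*)"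

text \<open>The branch sets are indexed
  by themselves (the indexing u \<mapsto> X_u is injective since they are disjoint and
  nonempty).\<close>
definition has_K_omega1_minor :: "'a set \<Rightarrow> 'a set set \<Rightarrow> bool" where
  "has_K_omega1_minor V E \<longleftrightarrow>
     (\<exists>\<X> :: 'a set set. (card_of \<X>, cardSuc natLeq) \<in> ordIso \<and>
        (\<forall>X\<in>\<X>. connected_in V E X) \<and>
        (\<forall>X\<in>\<X>. \<forall>Y\<in>\<X>. X \<noteq> Y \<longrightarrow> X \<inter> Y = {}) \<and>
        (\<forall>X\<in>\<X>. \<forall>Y\<in>\<X>. X \<noteq> Y \<longrightarrow> (\<exists>x\<in>X. \<exists>y\<in>Y. {x, y} \<in> E)))"

text \<open>The graphs competing in the definition of hc.\<close>
definition hc_candidate :: "'a set \<Rightarrow> 'a set set \<Rightarrow> bool" where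
  "hc_candidate V E \<longleftrightarrow> graph V E \<and> uncountably_chromatic V E \<and> \<not> has_K_omega1_minor V E"

end

theory Submission
  imports Defs
begin

lemma minor_mono:
  assumes "S \<subseteq> V" "F \<subseteq> E" "has_K_omega1_minor S F"
  shows "has_K_omega1_minor V E"
proof -
  have conn: "connected_in V E X" if "connected_in S F X" for X
  proof -
    let ?RF = "{(u, v). u \<in> X \<and> v \<in> X \<and> {u, v} \<in> F}"
    let ?RE = "{(u, v). u \<in> X \<and> v \<in> X \<and> {u, v} \<in> E}"
    have sub: "?RF \<subseteq> ?RE" using assms(2) by auto
    have a: "X \<noteq> {}" "X \<subseteq> S" and b: "\<forall>x\<in>X. \<forall>y\<in>X. (x, y) \<in> ?RF\<^sup>*"
      using that unfolding connected_in_def by auto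
    have c: "X \<subseteq> V" using a(2) assms(1) by (rule subset_trans)
    have d: "\<forall>x\<in>X. \<forall>y\<in>X. (x, y) \<in> ?RE\<^sup>*"
    proof (intro ballI)
      fix x y assume "x \<in> X" "y \<in> X"
      then have "(x, y) \<in> ?RF\<^sup>*" using b by simp
      then show "(x, y) \<in> ?RE\<^sup>*" using rtrancl_mono[OF sub] by (rule subsetD[rotated])
    qed
    show ?thesis unfolding connected_in_def using a(1) c d by (intro conjI)
  qed
  obtain XX where X1: "(card_of XX, cardSuc natLeq) \<in> ordIso"
    and X2: "\<forall>X\<in>XX. connected_in S F X"
    and X3: "\<forall>X\<in>XX. \<forall>Y\<in>XX. X \<noteq> Y \<longrightarrow> X \<inter> Y = {}"
    and X4: "\<forall>X\<in>XX. \<forall>Y\<in>XX. X \<noteq> Y \<longrightarrow> (\<exists>x\<in>X. \<exists>y\<in>Y. {x, y} \<in> F)"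
    using assms(3) unfolding has_K_omega1_minor_def by (elim exE conjE) (rule that)
  have X2': "\<forall>X\<in>XX. connected_in V E X" using X2 conn by blast
  have X4': "\<forall>X\<in>XX. \<forall>Y\<in>XX. X \<noteq> Y \<longrightarrow> (\<exists>x\<in>X. \<exists>y\<in>Y. {x, y} \<in> E)"
    using X4 assms(2) by blast
  show ?thesis unfolding has_K_omega1_minor_def
    by (rule exI[of _ XX], intro conjI, fact X1, fact X2', fact X3, fact X4')
qed

theorem mainTheorem3:
  fixes V :: "'a set" and E :: "'a set set"
  assumes "hc_candidate V E"
    and "\<forall>(V' :: 'a set) E'. hc_candidate V' E' \<longrightarrow> (card_of V, card_of V') \<in> ordLeq"
  shows "\<forall>r K. card_order_on V r \<and> K \<subseteq> V \<and> cofinal K r \<longrightarrow> uncountable K"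
proof (intro allI impI)
  fix r and K :: "'a set"
  assume h: "card_order_on V r \<and> K \<subseteq> V \<and> cofinal K r"
  have gr: "graph V E" and uc: "uncountably_chromatic V E" and nm: "\<not> has_K_omega1_minor V E"
    using assms(1) unfolding hc_candidate_def by auto
  have FV: "V = Field r" and CO: "Card_order r" using card_order_on_Card_order h by blast+
  have rV: "(r, card_of V) \<in> ordIso" using card_of_unique h by blast
  define S where "S k = underS r k" for k
  define F where "F k = {e\<in>E. e \<subseteq> S k}" for k
  have colk: "\<exists>c :: 'a \<Rightarrow> nat. \<forall>u\<in>S k. \<forall>v\<in>S k. {u, v} \<in> F k \<longrightarrow> c u \<noteq> c v" if "k \<in> K" for k
  proof -
    have kF: "k \<in> Field r" using that h FV by blast
    have lt: "(card_of (S k), card_of V) \<in> ordLess" unfolding S_def using ordLess_ordIso_trans[OF card_of_underS[OF CO kF] rV] .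
    have SV: "S k \<subseteq> V" unfolding S_def underS_def FV Field_def by auto
    have nc: "\<not> hc_candidate (S k) (F k)"
    proof
      assume "hc_candidate (S k) (F k)"
      then have "(card_of V, card_of (S k)) \<in> ordLeq" using assms(2) by blast
      then show False using lt not_ordLess_ordLeq by blast
    qed
    have g: "graph (S k) (F k)" using gr unfolding graph_def F_def by fastforce
    have FE: "F k \<subseteq> E" unfolding F_def by auto
    have m: "\<not> has_K_omega1_minor (S k) (F k)" using nm minor_mono[OF SV FE] by blast
    show ?thesis using nc g m unfolding hc_candidate_def uncountably_chromatic_def by simp
  qed
  then have "\<forall>k\<in>K. \<exists>c :: 'a \<Rightarrow> nat. \<forall>u\<in>S k. \<forall>v\<in>S k. {u, v} \<in> F k \<longrightarrow> c u \<noteq> c v" by blast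
  then have ex: "\<exists>c. \<forall>k\<in>K. \<forall>u\<in>S k. \<forall>v\<in>S k. {u, v} \<in> F k \<longrightarrow> c k u \<noteq> (c k v :: nat)" by (rule bchoice)
  then obtain c where c0: "\<forall>k\<in>K. \<forall>u\<in>S k. \<forall>v\<in>S k. {u, v} \<in> F k \<longrightarrow> c k u \<noteq> (c k v :: nat)"
    by blast
  have c: "\<And>k u v. k \<in> K \<Longrightarrow> u\<in>S k \<Longrightarrow> v\<in>S k \<Longrightarrow> {u, v} \<in> F k \<Longrightarrow> c k u \<noteq> c k v"
    using c0 by blast
  have exk: "\<exists>k. k \<in> K \<and> v \<in> S k" if "v \<in> V" for v
  proof -
    have "v \<in> Field r" using that FV by simp
    then obtain b where "b \<in> K" "v \<noteq> b" "(v, b) \<in> r" using h unfolding cofinal_def by blast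
    then show ?thesis unfolding S_def underS_def by blast
  qed
  have "\<forall>v\<in>V. \<exists>k. k \<in> K \<and> v \<in> S k" using exk by blast
  then have "\<exists>kk. \<forall>v\<in>V. kk v \<in> K \<and> v \<in> S (kk v)" by (rule bchoice)
  then obtain kk where kk0: "\<forall>v\<in>V. kk v \<in> K \<and> v \<in> S (kk v)" by blast
  have kk: "\<And>v. v \<in> V \<Longrightarrow> kk v \<in> K \<and> v \<in> S (kk v)" using kk0 by blast
  show "uncountable K"
  proof
    assume cK: "countable K"
    define col where "col v = prod_encode (to_nat_on K (kk v), c (kk v) v)" for v
    have "\<forall>u\<in>V. \<forall>v\<in>V. {u, v} \<in> E \<longrightarrow> col u \<noteq> col v"
    proof (intro ballI impI notI)
      fix u v assume uv: "u \<in> V" "v \<in> V" "{u, v} \<in> E" "col u = col v"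
      then have "(to_nat_on K (kk u), c (kk u) u) = (to_nat_on K (kk v), c (kk v) v)"
        unfolding col_def by (simp only: prod_encode_eq)
      then have e1: "to_nat_on K (kk u) = to_nat_on K (kk v)" and e2: "c (kk u) u = c (kk v) v"
        by auto
      have ku: "kk u \<in> K" "u \<in> S (kk u)" using kk uv(1) by auto
      have kv: "kk v \<in> K" "v \<in> S (kk v)" using kk uv(2) by auto
      have same: "kk u = kk v" using e1 to_nat_on_inj[OF cK ku(1) kv(1)] by simp
      have "{u, v} \<in> F (kk u)" unfolding F_def using uv(3) ku kv same by auto
      then show False using c[OF ku(1) ku(2)] kv(2) same e2 by auto
    qed
    then show False using uc unfolding uncountably_chromatic_def by blast
  qed
qed

end
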